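(* If a fragment $F$ was in the work state and remained active in wait state, it will enter the work state again only after each and every one of its neighboring fragments has been in the work state as well.
   Context: A broadcast network is modeled as a connected graph G(V,E) with n nodes. In the fragment-level leader election algorithm, nodes are partitioned into fragments each with a candidate; id(F) = (size, candidate identity) ordered lexicographically; an external edge between F1 and F2 with id(F1) > id(F2) is outgoing for F1 and incoming for F2. Initially each node is a size-1 fragment in state wait. A fragment with an outgoing edge is in wait; a fragment in wait whose external edges are all incoming moves to work, counts its size new_size and compares with its maximal neighbor F': if new_size > X · size(F') (X > 1) it remains active, updates its size, all of its external edges become outgoing, and it goes to wait; otherwise it joins F' (edges to F' become internal). A fragment with no external edges is the leader. While in wait a fragment does nothing; its edges change only through neighbors' actions (joining it or changing their size). *)

theory Defs
  imports Complex_Main "HOL-Library.Product_Lexorder"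
begin

(* A configuration of the fragment-level algorithm on node set V.
   cand s v : the candidate (= identity) of the fragment containing node v
   sz s c   : the recorded size of the fragment whose candidate is c *)
record 'v fconf =
  cand :: "'v \<Rightarrow> 'v"
  sz   :: "'v \<Rightarrow> nat"

definition init_conf :: "'v fconf" where
  "init_conf = \<lparr> cand = (\<lambda>v. v), sz = (\<lambda>_. 1) \<rparr>"

definition fragment :: "'v set \<Rightarrow> 'v fconf \<Rightarrow> 'v \<Rightarrow> 'v set" where
  "fragment V s c = {v \<in> V. cand s v = c}"

definition fragments :: "'v set \<Rightarrow> 'v fconf \<Rightarrow> 'v set" where
  "fragments V s = cand s ` V"

definition fid :: "'v fconf \<Rightarrow> 'v \<Rightarrow> nat \<times> 'v" where
  "fid s c = (sz s c, c)"

definition neighbours :: "'v set \<Rightarrow> ('v \<times> 'v) set \<Rightarrow> 'v fconf \<Rightarrow> 'v \<Rightarrow> 'v set" where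
  "neighbours V E s c = {d. d \<noteq> c \<and> (\<exists>u w. (u, w) \<in> E \<and> u \<in> V \<and> w \<in> V \<and> cand s u = c \<and> cand s w = d)}"

(* a fragment in wait with at least one external edge, all of them incoming,
   may move to work *)
definition may_work :: "'v set \<Rightarrow> ('v \<times> 'v) set \<Rightarrow> 'v fconf \<Rightarrow> ('v::linorder) \<Rightarrow> bool" where
  "may_work V E s c \<longleftrightarrow> c \<in> fragments V s \<and> neighbours V E s c \<noteq> {}
     \<and> (\<forall>d \<in> neighbours V E s c. fid s d > fid s c)"

definition max_neighbour :: "'v set \<Rightarrow> ('v \<times> 'v) set \<Rightarrow> 'v fconf \<Rightarrow> ('v::linorder) \<Rightarrow> 'v \<Rightarrow> bool" where
  "max_neighbour V E s c d \<longleftrightarrow> d \<in> neighbours V E s c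
     \<and> (\<forall>e \<in> neighbours V E s c. fid s e \<le> fid s d)"

(* work of fragment c that ends with c remaining active (back in wait) *)
definition stay_active :: "'v set \<Rightarrow> ('v \<times> 'v) set \<Rightarrow> real \<Rightarrow> 'v fconf \<Rightarrow> ('v::linorder) \<Rightarrow> 'v fconf \<Rightarrow> bool" where
  "stay_active V E X s c s' \<longleftrightarrow> may_work V E s c \<and>
     (\<exists>d. max_neighbour V E s c d \<and>
        real (card (fragment V s c)) > X * real (sz s d) \<and>
        s' = s\<lparr> sz := (sz s)(c := card (fragment V s c)) \<rparr>)"

definition join_step :: "'v set \<Rightarrow> ('v \<times> 'v) set \<Rightarrow> real \<Rightarrow> 'v fconf \<Rightarrow> ('v::linorder) \<Rightarrow> 'v fconf \<Rightarrow> bool" where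
  "join_step V E X s c s' \<longleftrightarrow> may_work V E s c \<and>
     (\<exists>d. max_neighbour V E s c d \<and>
        \<not> (real (card (fragment V s c)) > X * real (sz s d)) \<and>
        s' = s\<lparr> cand := (\<lambda>v. if cand s v = c then d else cand s v) \<rparr>)"

(* one (atomic) work phase of fragment c *)
definition work_step :: "'v set \<Rightarrow> ('v \<times> 'v) set \<Rightarrow> real \<Rightarrow> 'v fconf \<Rightarrow> ('v::linorder) \<Rightarrow> 'v fconf \<Rightarrow> bool" where
  "work_step V E X s c s' \<longleftrightarrow> stay_active V E X s c s' \<or> join_step V E X s c s'"

definition conn_graph :: "'v set \<Rightarrow> ('v \<times> 'v) set \<Rightarrow> bool" where
  "conn_graph V E \<longleftrightarrow> finite V \<and> V \<noteq> {} \<and> E \<subseteq> V \<times> V \<and> sym E \<and>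
     (\<forall>u \<in> V. \<forall>w \<in> V. (u, w) \<in> E\<^sup>*)"

end

theory Submission
  imports Defs
begin

lemma ws_pres:
  assumes "work_step V E X s c s'" "c \<noteq> x"
  shows "(cand s v = x \<longrightarrow> cand s' v = x) \<and> sz s' x = sz s x"
  using assms unfolding work_step_def stay_active_def join_step_def by auto

theorem lemma3:
  fixes V :: "('v::linorder) set" and E :: "('v \<times> 'v) set" and X :: real
    and s :: "nat \<Rightarrow> 'v fconf" and act :: "nat \<Rightarrow> 'v" and n :: nat
    and F :: 'v and t t' :: nat
  assumes "conn_graph V E"
    and "X > 1"
    and "s 0 = init_conf"
    and "\<forall>i < n. work_step V E X (s i) (act i) (s (Suc i))"
    and "t < t'" and "t' < n"
    and "act t = F" and "stay_active V E X (s t) F (s (Suc t))"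
    and "act t' = F"
  shows "\<forall>G \<in> neighbours V E (s (Suc t)) F. \<exists>j. t < j \<and> j < t' \<and> act j = G"
proof
  fix G assume G: "G \<in> neighbours V E (s (Suc t)) F"
  show "\<exists>j. t < j \<and> j < t' \<and> act j = G"
  proof (rule ccontr)
    assume nG: "\<not> ?thesis"
    obtain u w where uw: "(u, w) \<in> E" "u \<in> V" "w \<in> V" "cand (s (Suc t)) u = F"
      "cand (s (Suc t)) w = G" and GF: "G \<noteq> F"
      using G unfolding neighbours_def by auto
    have cs: "cand (s (Suc t)) = cand (s t)" and
      szF: "sz (s (Suc t)) F = card (fragment V (s t) F)" and
      szG: "sz (s (Suc t)) G = sz (s t) G"
      using assms(8) GF unfolding stay_active_def by auto
    obtain d where d: "max_neighbour V E (s t) F d"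
      "real (card (fragment V (s t) F)) > X * real (sz (s t) d)"
      using assms(8) unfolding stay_active_def by auto
    have Gn: "G \<in> neighbours V E (s t) F" using G cs unfolding neighbours_def by simp
    have "fid (s t) G \<le> fid (s t) d" using d(1) Gn unfolding max_neighbour_def by auto
    hence "sz (s t) G \<le> sz (s t) d" unfolding fid_def by (auto simp: less_eq_prod_def)
    hence "real (sz (s t) G) \<le> X * real (sz (s t) d)"
      using assms(2) by (smt (verit, best) mult_le_cancel_right1 of_nat_0_le_iff of_nat_le_iff)
    hence lt: "sz (s (Suc t)) G < sz (s (Suc t)) F" using d(2) szF szG by linarith
    define t1 where "t1 = (LEAST k. t < k \<and> act k = F)"
    have t1: "t < t1 \<and> act t1 = F" unfolding t1_def
      by (rule LeastI[of _ t']) (use assms in auto)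
    have t1le: "t1 \<le> t'" unfolding t1_def by (rule Least_le) (use assms in auto)
    have nF: "act j \<noteq> F" if "t < j" "j < t1" for j
      using not_less_Least[of j "\<lambda>k. t < k \<and> act k = F"] that unfolding t1_def by auto
    have inv: "cand (s k) u = F \<and> cand (s k) w = G \<and> sz (s k) F = sz (s (Suc t)) F
       \<and> sz (s k) G = sz (s (Suc t)) G" if "Suc t \<le> k" "k \<le> t1" for k
      using that
    proof (induction k rule: dec_induct)
      case base then show ?case using uw by simp
    next
      case (step k)
      have ws: "work_step V E X (s k) (act k) (s (Suc k))" using assms(4) step t1le assms(6) by auto
      have "act k \<noteq> F" using nF step by auto
      moreover have "act k \<noteq> G" using nG step t1le by auto
      ultimately show ?case using ws_pres[OF ws] step by auto
    qed
    have I: "cand (s t1) u = F" "cand (s t1) w = G" "sz (s t1) F = sz (s (Suc t)) F"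
       "sz (s t1) G = sz (s (Suc t)) G" using inv[of t1] t1 by auto
    have "work_step V E X (s t1) F (s (Suc t1))" using assms(4,6) t1 t1le by (metis le_less_trans)
    hence mw: "may_work V E (s t1) F" unfolding work_step_def stay_active_def join_step_def by auto
    have "G \<in> neighbours V E (s t1) F" using I uw GF unfolding neighbours_def by auto
    hence "fid (s t1) G > fid (s t1) F" using mw unfolding may_work_def by auto
    hence "sz (s t1) G \<ge> sz (s t1) F" unfolding fid_def by (auto simp: less_prod_def)
    thus False using I lt by simp
  qed
qed

end
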